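(* Let $G$ be a connected distance-hereditary graph. Then $G$ is twin-free if and only if $G$ is prime.
   Context: All graphs are finite and simple. A graph is distance-hereditary if it has no induced subgraph isomorphic to a hole (an induced cycle of length at least $5$), the house (a $5$-cycle plus one chord), the domino (a $6$-cycle $v_1\dots v_6$ plus the chord $v_1v_4$), or the gem ($P_4$ plus a vertex adjacent to all four of its vertices). Two distinct vertices $u,v$ are twins if $N(u)\setminus\{u,v\}=N(v)\setminus\{u,v\}$; a graph is twin-free if it has no pair of twins. A module of $G=(V,E)$ is a set $M\subseteq V$ such that every $v\in V\setminus M$ is adjacent to all or to none of $M$; it is trivial if $|M|=1$ or $M=V$; $G$ is prime if all its modules are trivial. *)

theory Defs
  imports Main
begin

definition simple_graph :: "'a set \<Rightarrow> ('a \<Rightarrow> 'a \<Rightarrow> bool) \<Rightarrow> bool" where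
  "simple_graph V E \<longleftrightarrow> finite V \<and> (\<forall>u\<in>V. \<forall>v\<in>V. E u v \<longleftrightarrow> E v u) \<and> (\<forall>v\<in>V. \<not> E v v)"

definition nbhd :: "'a set \<Rightarrow> ('a \<Rightarrow> 'a \<Rightarrow> bool) \<Rightarrow> 'a \<Rightarrow> 'a set" where
  "nbhd V E v = {w \<in> V. E v w}"

definition connected_graph :: "'a set \<Rightarrow> ('a \<Rightarrow> 'a \<Rightarrow> bool) \<Rightarrow> bool" where
  "connected_graph V E \<longleftrightarrow> V \<noteq> {} \<and>
     (\<forall>u\<in>V. \<forall>v\<in>V. (\<lambda>x y. x \<in> V \<and> y \<in> V \<and> E x y)\<^sup>*\<^sup>* u v)"

definition has_induced :: "'a set \<Rightarrow> ('a \<Rightarrow> 'a \<Rightarrow> bool) \<Rightarrow> nat \<Rightarrow> (nat \<Rightarrow> nat \<Rightarrow> bool) \<Rightarrow> bool" where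
  "has_induced V E n H \<longleftrightarrow> (\<exists>f. inj_on f {..<n} \<and> f ` {..<n} \<subseteq> V \<and>
     (\<forall>i<n. \<forall>j<n. i \<noteq> j \<longrightarrow> (E (f i) (f j) \<longleftrightarrow> H i j)))"

definition cycle_adj :: "nat \<Rightarrow> nat \<Rightarrow> nat \<Rightarrow> bool" where
  "cycle_adj n i j \<longleftrightarrow> j = (i + 1) mod n \<or> i = (j + 1) mod n"

definition house_adj :: "nat \<Rightarrow> nat \<Rightarrow> bool" where
  "house_adj i j \<longleftrightarrow> cycle_adj 5 i j \<or> {i, j} = {0, 2}"

definition domino_adj :: "nat \<Rightarrow> nat \<Rightarrow> bool" where
  "domino_adj i j \<longleftrightarrow> cycle_adj 6 i j \<or> {i, j} = {0, 3}"

definition gem_adj :: "nat \<Rightarrow> nat \<Rightarrow> bool" where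
  "gem_adj i j \<longleftrightarrow> {i, j} \<in> {{0, 1}, {1, 2}, {2, 3}, {0, 4}, {1, 4}, {2, 4}, {3, 4}}"

definition distance_hereditary :: "'a set \<Rightarrow> ('a \<Rightarrow> 'a \<Rightarrow> bool) \<Rightarrow> bool" where
  "distance_hereditary V E \<longleftrightarrow>
     (\<forall>k\<ge>5. \<not> has_induced V E k (cycle_adj k)) \<and>
     \<not> has_induced V E 5 house_adj \<and>
     \<not> has_induced V E 6 domino_adj \<and>
     \<not> has_induced V E 5 gem_adj"

definition twins :: "'a set \<Rightarrow> ('a \<Rightarrow> 'a \<Rightarrow> bool) \<Rightarrow> 'a \<Rightarrow> 'a \<Rightarrow> bool" where
  "twins V E u v \<longleftrightarrow> u \<noteq> v \<and> nbhd V E u - {u, v} = nbhd V E v - {u, v}"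

definition twin_free :: "'a set \<Rightarrow> ('a \<Rightarrow> 'a \<Rightarrow> bool) \<Rightarrow> bool" where
  "twin_free V E \<longleftrightarrow> \<not> (\<exists>u\<in>V. \<exists>v\<in>V. twins V E u v)"

text \<open>Modules are taken to be nonempty (otherwise the empty set would be a nontrivial module).\<close>
definition is_module :: "'a set \<Rightarrow> ('a \<Rightarrow> 'a \<Rightarrow> bool) \<Rightarrow> 'a set \<Rightarrow> bool" where
  "is_module V E M \<longleftrightarrow> M \<noteq> {} \<and> M \<subseteq> V \<and>
     (\<forall>v\<in>V - M. (\<forall>m\<in>M. E v m) \<or> (\<forall>m\<in>M. \<not> E v m))"

definition trivial_module :: "'a set \<Rightarrow> 'a set \<Rightarrow> bool" where
  "trivial_module V M \<longleftrightarrow> card M = 1 \<or> M = V"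

definition prime_graph :: "'a set \<Rightarrow> ('a \<Rightarrow> 'a \<Rightarrow> bool) \<Rightarrow> bool" where
  "prime_graph V E \<longleftrightarrow> (\<forall>M. is_module V E M \<longrightarrow> trivial_module V M)"

end

theory Submission
  imports Defs
begin

definition symm_on :: "'a set \<Rightarrow> ('a \<Rightarrow> 'a \<Rightarrow> bool) \<Rightarrow> bool" where
  "symm_on S E \<longleftrightarrow> (\<forall>u\<in>S. \<forall>v\<in>S. E u v \<longleftrightarrow> E v u)"

definition p4free :: "'a set \<Rightarrow> ('a \<Rightarrow> 'a \<Rightarrow> bool) \<Rightarrow> bool" where
  "p4free S E \<longleftrightarrow> (\<forall>a\<in>S. \<forall>b\<in>S. \<forall>c\<in>S. \<forall>d\<in>S.
     \<not> (distinct [a,b,c,d] \<and> E a b \<and> E b c \<and> E c d \<and> \<not> E a c \<and> \<not> E b d \<and> \<not> E a d))"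

definition splitg :: "'a set \<Rightarrow> ('a \<Rightarrow> 'a \<Rightarrow> bool) \<Rightarrow> bool \<Rightarrow> bool" where
  "splitg S E c \<longleftrightarrow> (\<exists>A B. A \<union> B = S \<and> A \<inter> B = {} \<and> A \<noteq> {} \<and> B \<noteq> {} \<and>
     (\<forall>a\<in>A. \<forall>b\<in>B. E a b = c))"

lemma p4free_compl:
  assumes "symm_on S E" "p4free S E"
  shows "p4free S (\<lambda>x y. \<not> E x y)"
  unfolding p4free_def
proof (intro ballI notI)
  fix a b c d assume abcd: "a \<in> S" "b \<in> S" "c \<in> S" "d \<in> S"
    and h: "distinct [a,b,c,d] \<and> \<not> E a b \<and> \<not> E b c \<and> \<not> E c d \<and> \<not> \<not> E a c \<and> \<not> \<not> E b d \<and> \<not> \<not> E a d"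
  have "\<not> (distinct [c,a,d,b] \<and> E c a \<and> E a d \<and> E d b \<and> \<not> E c d \<and> \<not> E a b \<and> \<not> E c b)"
    using assms(2)[unfolded p4free_def] abcd by meson
  moreover have "E c a" "E d b" "\<not> E c b" using h assms(1) abcd unfolding symm_on_def by auto
  ultimately show False using h by auto
qed

lemma p4free_subset: "p4free S E \<Longrightarrow> T \<subseteq> S \<Longrightarrow> p4free T E"
  unfolding p4free_def by blast

lemma symm_on_subset: "symm_on S E \<Longrightarrow> T \<subseteq> S \<Longrightarrow> symm_on T E"
  unfolding symm_on_def by blast

lemma symm_on_compl: "symm_on S E \<Longrightarrow> symm_on S (\<lambda>x y. \<not> E x y)"
  unfolding symm_on_def by blast

lemma splitg_compl: "splitg S (\<lambda>x y. \<not> E x y) c \<longleftrightarrow> splitg S E (\<not> c)"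
  proof -
  have "\<And>P. ((\<not> P) = c) = (P = (\<not> c))" by auto
  then show ?thesis unfolding splitg_def by simp
qed

lemma step_false:
  assumes sym: "symm_on (insert x S) E" and p4: "p4free (insert x S) E" and xS: "x \<notin> S"
    and sp: "splitg S E False"
  shows "\<exists>c. splitg (insert x S) E c"
proof -
  have symE: "\<And>u v. u \<in> insert x S \<Longrightarrow> v \<in> insert x S \<Longrightarrow> E u v \<longleftrightarrow> E v u"
    using sym unfolding symm_on_def by blast
  have p4E: "\<And>a b c d. a \<in> insert x S \<Longrightarrow> b \<in> insert x S \<Longrightarrow> c \<in> insert x S \<Longrightarrow> d \<in> insert x S \<Longrightarrow>
     distinct [a,b,c,d] \<Longrightarrow> E a b \<Longrightarrow> E b c \<Longrightarrow> E c d \<Longrightarrow> \<not> E a c \<Longrightarrow> \<not> E b d \<Longrightarrow> \<not> E a d \<Longrightarrow> False"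
    using p4 unfolding p4free_def by blast
  obtain A B where AB: "A \<union> B = S" "A \<inter> B = {}" "A \<noteq> {}" "B \<noteq> {}"
    and nab: "\<forall>a\<in>A. \<forall>b\<in>B. \<not> E a b"
    using sp unfolding splitg_def by auto
  have nba: "\<forall>a\<in>A. \<forall>b\<in>B. \<not> E b a"
  proof (intro ballI)
    fix a b assume "a \<in> A" "b \<in> B"
    then show "\<not> E b a" using nab symE[of a b] AB(1) by blast
  qed
  show ?thesis
  proof (cases "\<forall>y\<in>S. E x y")
    case True
    have "splitg (insert x S) E True"
      unfolding splitg_def
      by (rule exI[of _ "{x}"], rule exI[of _ S]) (use True xS AB in auto)
    then show ?thesis by blast
  next
    case False
    then obtain y where y: "y \<in> S" "\<not> E x y" by blast
    show ?thesis
    proof (cases "\<exists>a\<in>S. \<exists>b\<in>S. E x a \<and> \<not> E x b \<and> E a b")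
      case True
      then obtain a b where ab: "a \<in> S" "b \<in> S" "E x a" "\<not> E x b" "E a b" by blast
      have anb: "a \<noteq> b" using ab(3,4) by metis
      have xa: "E a x" "\<not> E b x" "E b a"
        using ab symE[of a x] symE[of b x] symE[of a b] by simp_all
      have "a \<in> A \<or> a \<in> B" using ab(1) AB(1) by blast
      then show ?thesis
      proof
        assume aA: "a \<in> A"
        then have bA: "b \<in> A" using ab(2,5) nab AB(1) by blast
        show ?thesis
        proof (cases "\<exists>c\<in>B. E x c")
          case True
          then obtain c where c: "c \<in> B" "E x c" by blast
          have ncs: "\<not> E a c" "\<not> E b c" using nab aA bA c(1) by blast+
          have "c \<notin> A" using c(1) AB(2) by blast
          then have "distinct [b,a,x,c]" using anb aA bA c(1) AB(1) xS by auto
          moreover have "c \<in> S" using c(1) AB(1) by blast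
          ultimately show ?thesis using p4E[of b a x c] ab xa ncs c(2) by blast
        next
          case False
          have "splitg (insert x S) E False"
            unfolding splitg_def
            by (rule exI[of _ "insert x A"], rule exI[of _ B]) (use False xS AB nab in auto)
          then show ?thesis by blast
        qed
      next
        assume aA: "a \<in> B"
        then have bA: "b \<in> B" using ab(2,5) nba AB(1) by blast
        show ?thesis
        proof (cases "\<exists>c\<in>A. E x c")
          case True
          then obtain c where c: "c \<in> A" "E x c" by blast
          have ncs: "\<not> E a c" "\<not> E b c" using nba aA bA c(1) by blast+
          have "c \<notin> B" using c(1) AB(2) by blast
          then have "distinct [b,a,x,c]" using anb aA bA c(1) AB(1) xS by auto
          moreover have "c \<in> S" using c(1) AB(1) by blast
          ultimately show ?thesis using p4E[of b a x c] ab xa ncs c(2) by blast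
        next
          case False
          have nxa: "\<forall>a\<in>A. \<not> E a x"
          proof
            fix a assume "a \<in> A" then show "\<not> E a x" using False symE[of a x] AB(1) by blast
          qed
          have "splitg (insert x S) E False"
            unfolding splitg_def
            by (rule exI[of _ A], rule exI[of _ "insert x B"]) (use nxa xS AB nab in auto)
          then show ?thesis by blast
        qed
      qed
    next
      case False
      have "splitg (insert x S) E False"
        unfolding splitg_def
      proof (rule exI[of _ "{q\<in>S. \<not> E x q}"], rule exI[of _ "insert x {q\<in>S. E x q}"], intro conjI ballI)
        fix a b assume a: "a \<in> {q\<in>S. \<not> E x q}" and b: "b \<in> insert x {q\<in>S. E x q}"
        show "E a b = False"
        proof (cases "b = x")
          case True then show ?thesis using a symE[of a x] by auto
        next
          case False
          then have "b \<in> S" "E x b" using b by auto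
          then have "\<not> E b a" using \<open>\<not> (\<exists>a\<in>S. \<exists>b\<in>S. E x a \<and> \<not> E x b \<and> E a b)\<close> a by blast
          then show ?thesis using a \<open>b \<in> S\<close> symE[of a b] by auto
        qed
      qed (use y xS in auto)
      then show ?thesis by blast
    qed
  qed
qed

lemma seinsche:
  assumes "finite S" "card S \<ge> 2" "symm_on S E" "p4free S E"
  shows "\<exists>c. splitg S E c"
  using assms
proof (induction S arbitrary: E rule: finite_induct)
  case empty then show ?case by simp
next
  case (insert x F)
  have cF: "card F \<ge> 1" using insert by simp
  show ?case
  proof (cases "card F = 1")
    case True
    then obtain y where F: "F = {y}" by (auto simp: card_Suc_eq)
    have "splitg (insert x F) E (E x y)"
      unfolding splitg_def
      by (rule exI[of _ "{x}"], rule exI[of _ "{y}"]) (use F insert.hyps in auto)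
    then show ?thesis by blast
  next
    case False
    then have c2: "card F \<ge> 2" using cF by simp
    have sF: "symm_on F E" "p4free F E"
      using insert.prems symm_on_subset p4free_subset by blast+
    obtain c where c: "splitg F E c" using insert.IH[OF c2 sF] by blast
    show ?thesis
    proof (cases c)
      case False
      then show ?thesis using step_false[OF insert.prems(2,3) insert.hyps(2)] c by simp
    next
      case True
      have "splitg F (\<lambda>x y. \<not> E x y) False" using c True splitg_compl by metis
      then obtain c' where "splitg (insert x F) (\<lambda>x y. \<not> E x y) c'"
        using step_false[OF symm_on_compl[OF insert.prems(2)] p4free_compl[OF insert.prems(2,3)] insert.hyps(2)]
        by blast
      then show ?thesis using splitg_compl by metis
    qed
  qed
qed

lemma p4free_twins:
  assumes "finite S" "card S \<ge> 2" "symm_on S E" "p4free S E"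
  shows "\<exists>u\<in>S. \<exists>v\<in>S. u \<noteq> v \<and> (\<forall>w\<in>S-{u,v}. E u w = E v w)"
  using assms
proof (induction "card S" arbitrary: S rule: less_induct)
  case less
  obtain c A B where AB: "A \<union> B = S" "A \<inter> B = {}" "A \<noteq> {}" "B \<noteq> {}"
    and cab: "\<forall>a\<in>A. \<forall>b\<in>B. E a b = c"
    using seinsche[OF less.prems] unfolding splitg_def by blast
  have fin: "finite A" "finite B" using AB less.prems(1) by auto
  have ltA: "card A < card S"
    using AB fin by (metis card_Un_disjoint card_gt_0_iff less_add_same_cancel1)
  have ltB: "card B < card S"
    using AB fin by (metis card_Un_disjoint card_gt_0_iff less_add_same_cancel2)
  show ?case
  proof (cases "card A \<ge> 2")
    case True
    obtain u v where uv: "u \<in> A" "v \<in> A" "u \<noteq> v" "\<forall>w\<in>A-{u,v}. E u w = E v w"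
      using less.hyps[OF ltA fin(1) True symm_on_subset[OF less.prems(3)] p4free_subset[OF less.prems(4)]] AB
      by blast
    have "\<forall>w\<in>S-{u,v}. E u w = E v w" using uv cab AB by blast
    then show ?thesis using uv AB by blast
  next
    case nA: False
    show ?thesis
    proof (cases "card B \<ge> 2")
      case True
      obtain u v where uv: "u \<in> B" "v \<in> B" "u \<noteq> v" "\<forall>w\<in>B-{u,v}. E u w = E v w"
        using less.hyps[OF ltB fin(2) True symm_on_subset[OF less.prems(3)] p4free_subset[OF less.prems(4)]] AB
        by blast
      have "\<forall>w\<in>A. E w u = E w v" using uv cab by blast
      then have "\<forall>w\<in>A. E u w = E v w" using less.prems(3) AB uv unfolding symm_on_def by blast
      then have "\<forall>w\<in>S-{u,v}. E u w = E v w" using uv AB by blast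
      then show ?thesis using uv AB by blast
    next
      case False
      have "card A > 0" "card B > 0" using AB fin by (auto simp: card_gt_0_iff)
      then have "card A = 1" "card B = 1" using nA False by linarith+
      then obtain u v where "A = {u}" "B = {v}" by (auto simp: card_Suc_eq)
      then show ?thesis using AB by auto
    qed
  qed
qed

lemma gem_found:
  assumes V: "a \<in> V" "b \<in> V" "c \<in> V" "d \<in> V" "w \<in> V" and dist: "distinct [a,b,c,d,w]"
    and sym: "symm_on V E"
    and e: "E a b" "E b c" "E c d" "\<not> E a c" "\<not> E b d" "\<not> E a d" "E w a" "E w b" "E w c" "E w d"
  shows "has_induced V E 5 gem_adj"
proof -
  define f where "f = (\<lambda>i. [a,b,c,d,w] ! i)"
  have e2: "E b a" "E c b" "E d c" "\<not> E c a" "\<not> E d b" "\<not> E d a" "E a w" "E b w" "E c w" "E d w"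
    using e V sym unfolding symm_on_def by auto
  have fi: "f 0 = a" "f 1 = b" "f 2 = c" "f 3 = d" "f 4 = w" "f (Suc 0) = b" by (simp_all add: f_def)
  have five: "\<And>P. (\<forall>i<(5::nat). P i) \<longleftrightarrow> P 0 \<and> P 1 \<and> P 2 \<and> P 3 \<and> P 4"
    by (auto simp: numeral_eq_Suc less_Suc_eq)
  have "inj_on f {..<5}"
    unfolding f_def by (rule inj_on_nth[OF dist]) simp
  moreover have "f ` {..<5} \<subseteq> V"
  proof
    fix z assume "z \<in> f ` {..<5}"
    then obtain i where i: "i < 5" "z = [a,b,c,d,w] ! i" unfolding f_def by auto
    have "z \<in> set [a,b,c,d,w]" unfolding i(2) by (rule nth_mem) (use i(1) in simp)
    then show "z \<in> V" using V by auto
  qed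
  moreover have "\<forall>i<5. \<forall>j<5. i \<noteq> j \<longrightarrow> (E (f i) (f j) \<longleftrightarrow> gem_adj i j)"
    unfolding five using e e2 by (simp add: fi gem_adj_def doubleton_eq_iff)
  ultimately show ?thesis unfolding has_induced_def by blast
qed

lemma rtranclp_leave:
  assumes "R\<^sup>*\<^sup>* u v" "u \<in> M" "v \<notin> M"
  shows "\<exists>x y. R x y \<and> x \<in> M \<and> y \<notin> M"
  using assms by (induction rule: rtranclp_induct) auto

theorem lemma5:
  fixes V :: "'a set" and E :: "'a \<Rightarrow> 'a \<Rightarrow> bool"
  assumes "simple_graph V E"
    and "connected_graph V E"
    and "distance_hereditary V E"
    and "card V \<noteq> 2"
  shows "twin_free V E \<longleftrightarrow> prime_graph V E"
proof
  have fin: "finite V" and sym: "symm_on V E"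
    using assms(1) unfolding simple_graph_def symm_on_def by auto
  assume tf: "twin_free V E"
  show "prime_graph V E"
    unfolding prime_graph_def
  proof (intro allI impI)
    fix M assume mod: "is_module V E M"
    show "trivial_module V M"
    proof (rule ccontr)
      assume nt: "\<not> trivial_module V M"
      have MV: "M \<noteq> {}" "M \<subseteq> V" and modc: "\<forall>v\<in>V - M. (\<forall>m\<in>M. E v m) \<or> (\<forall>m\<in>M. \<not> E v m)"
        using mod unfolding is_module_def by auto
      have finM: "finite M" using MV fin finite_subset by blast
      have "card M \<noteq> 1" using nt unfolding trivial_module_def by blast
      moreover have "card M > 0" using MV finM by (simp add: card_gt_0_iff)
      ultimately have c2: "card M \<ge> 2" by linarith
      have "M \<noteq> V" using nt unfolding trivial_module_def by auto
      then obtain m v where mv: "m \<in> M" "v \<in> V" "v \<notin> M" using MV by blast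
      have "(\<lambda>x y. x \<in> V \<and> y \<in> V \<and> E x y)\<^sup>*\<^sup>* m v"
        using assms(2) mv MV unfolding connected_graph_def by blast
      then obtain x y where xy: "x \<in> V" "y \<in> V" "E x y" "x \<in> M" "y \<notin> M"
        using rtranclp_leave[of _ m v M] mv by blast
      have "E y x" using xy sym unfolding symm_on_def by auto
      then have yall: "\<forall>m\<in>M. E y m" using modc xy by blast
      have p4: "p4free M E"
        unfolding p4free_def
      proof (intro ballI notI)
        fix a b c d assume abcd: "a \<in> M" "b \<in> M" "c \<in> M" "d \<in> M"
          and h: "distinct [a,b,c,d] \<and> E a b \<and> E b c \<and> E c d \<and> \<not> E a c \<and> \<not> E b d \<and> \<not> E a d"
        have "has_induced V E 5 gem_adj"
          by (rule gem_found[of a V b c d y E]) (use abcd MV xy h yall sym in auto)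
        then show False using assms(3) unfolding distance_hereditary_def by blast
      qed
      obtain u w where uw: "u \<in> M" "w \<in> M" "u \<noteq> w" "\<forall>z\<in>M-{u,w}. E u z = E w z"
        using p4free_twins[OF finM c2 symm_on_subset[OF sym MV(2)] p4] by blast
      have "twins V E u w"
        unfolding twins_def nbhd_def
      proof (intro conjI)
        show "u \<noteq> w" by fact
        have "\<forall>z\<in>V-{u,w}. E u z = E w z"
        proof
          fix z assume z: "z \<in> V - {u,w}"
          show "E u z = E w z"
          proof (cases "z \<in> M")
            case True then show ?thesis using uw z by blast
          next
            case False
            then have "E z u = E z w" using modc z uw by blast
            then show ?thesis using sym z uw MV unfolding symm_on_def by blast
          qed
        qed
        then show "{z \<in> V. E u z} - {u, w} = {z \<in> V. E w z} - {u, w}" by blast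
      qed
      then show False using tf uw MV unfolding twin_free_def by blast
    qed
  qed
next
  have sym: "\<forall>u\<in>V. \<forall>v\<in>V. E u v \<longleftrightarrow> E v u"
    using assms(1) unfolding simple_graph_def by auto
  assume pr: "prime_graph V E"
  show "twin_free V E"
    unfolding twin_free_def
  proof
    assume "\<exists>u\<in>V. \<exists>v\<in>V. twins V E u v"
    then obtain u v where uv: "u \<in> V" "v \<in> V" "u \<noteq> v"
      and nb: "nbhd V E u - {u, v} = nbhd V E v - {u, v}"
      unfolding twins_def by blast
    have "is_module V E {u, v}"
      unfolding is_module_def
    proof (intro conjI ballI)
      show "{u, v} \<noteq> {}" by simp
      show "{u, v} \<subseteq> V" using uv by simp
      fix z assume z: "z \<in> V - {u, v}"
      have "E u z = E v z" using nb z unfolding nbhd_def by blast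
      then have "E z u = E z v" using sym z uv by blast
      then show "(\<forall>m\<in>{u, v}. E z m) \<or> (\<forall>m\<in>{u, v}. \<not> E z m)" by auto
    qed
    then have "trivial_module V {u, v}" using pr unfolding prime_graph_def by blast
    then have "{u, v} = V" using uv unfolding trivial_module_def by auto
    then show False using assms(4) uv by auto
  qed
qed

end
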